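(* Let $(\mathbb{X},d)$ be a complete metric space, let $F=(\mathbb{X};f_1,\dots,f_N)$ be an iterated function system of continuous maps $f_i:\mathbb{X}\to\mathbb{X}$, and let $A$ be a point-fibred attractor of $F$ with coordinate map $\pi:[N]^\infty\to A$. With respect to $A$ and $F$ (and the notions of disjunctive, reversible, strongly reversible and full words defined in the context): \begin{enumerate} \item If $N\ge 2$, there are infinitely many disjunctive words in $[N]^\infty$. \item If $A^{o}\neq\emptyset$, then every disjunctive word is strongly reversible. \item Every strongly reversible word is reversible. \item A word $\theta\in[N]^\infty$ is reversible if and only if it is full. \end{enumerate}
   Context: $S^o$ denotes the interior of a set $S$. $\mathbb{H}(\mathbb{X})$ is the set of nonempty compact subsets of $\mathbb{X}$ with the Hausdorff metric, and $F(B)=\bigcup_i f_i(B)$, with $F^k$ its $k$-fold iterate. A nonempty compact $A$ is an attractor of $F$ if $F(A)=A$ and there is an open $U\supset A$ with $F^k(S)\to A$ in the Hausdorff metric for all $S\in\mathbb{H}(U)$; the basin $B(A)$ is the union of all such $U$. $[N]=\{1,\dots,N\}$, $[N]^\infty$ is the set of infinite words $\omega=\omega_1\omega_2\cdots$ with $\omega_i\in[N]$, $\omega|k=\omega_1\cdots\omega_k$, and $f_{\omega|k}=f_{\omega_1}\circ\cdots\circ f_{\omega_k}$. The attractor $A$ is point-fibred if for every $\omega\in[N]^\infty$ and every $C\in\mathbb{H}(\mathbb{X})$ with $C\subset B(A)$ the sequence $f_{\omega|k}(C)$ converges in $\mathbb{H}(\mathbb{X})$ to a singleton $\{\pi(\omega)\}$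 independent of $C$; this defines the coordinate map $\pi$, and any word in $\pi^{-1}(x)$ is an address of $x\in A$. A subword of a word is a string of consecutive letters. A word $\theta\in[N]^\infty$ is disjunctive if every finite word over $[N]$ is a subword of $\theta$. $\theta$ is reversible (w.r.t. $A,F$) if there is $\omega\in[N]^\infty$ with $\pi(\omega)\in A^o$ such that for all positive integers $M,L$ there is an integer $m\ge M$ with $\omega_1\omega_2\cdots\omega_L=\theta_{m+L}\theta_{m+L-1}\cdots\theta_{m+1}$. $\theta$ is strongly reversible if there is $\omega\in[N]^\infty$ with $\pi(\omega)\in A^o$ such that for every positive integer $M$ there is $m\ge M$ with $\omega_1\cdots\omega_m=\theta_m\theta_{m-1}\cdots\theta_1$. $\theta$ is full if there exists a nonempty compact set $A'\subset A^o$ such that for every positive integer $M$ there exist integers $n>m\ge M$ with $f_{\theta_n}\circ f_{\theta_{n-1}}\circ\cdots\circ f_{\theta_{m+1}}(A)\subset A'$. *)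

theory Defs
  imports "HOL-Analysis.Analysis"
begin

text \<open>Hausdorff distance between nonempty compact sets (all sets to which it is
applied below are nonempty and compact).\<close>
definition hausdist :: "'a::metric_space set \<Rightarrow> 'a set \<Rightarrow> real" where
  "hausdist S T = max (SUP x\<in>S. infdist x T) (SUP y\<in>T. infdist y S)"

definition ne_compact :: "'a::metric_space set \<Rightarrow> bool" where
  "ne_compact S \<longleftrightarrow> S \<noteq> {} \<and> compact S"

definition hutch :: "(nat \<Rightarrow> 'a \<Rightarrow> 'a) \<Rightarrow> nat \<Rightarrow> 'a set \<Rightarrow> 'a set" where
  "hutch f N B = (\<Union>i\<in>{1..N}. f i ` B)"

text \<open>Infinite words over [N] = {1..N}; the letter omega_(k+1) of the paper is omega k.\<close>
definition words :: "nat \<Rightarrow> (nat \<Rightarrow> nat) set" where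
  "words N = {\<omega>. \<forall>k. \<omega> k \<in> {1..N}}"

fun fcomp :: "(nat \<Rightarrow> 'a \<Rightarrow> 'a) \<Rightarrow> (nat \<Rightarrow> nat) \<Rightarrow> nat \<Rightarrow> 'a \<Rightarrow> 'a" where
  "fcomp f \<omega> 0 = id"
| "fcomp f \<omega> (Suc k) = fcomp f \<omega> k \<circ> f (\<omega> k)"

text \<open>blockcomp f theta m k = f_(theta_(m+k)) o ... o f_(theta_(m+1)) (paper's 1-based letters).\<close>
fun blockcomp :: "(nat \<Rightarrow> 'a \<Rightarrow> 'a) \<Rightarrow> (nat \<Rightarrow> nat) \<Rightarrow> nat \<Rightarrow> nat \<Rightarrow> 'a \<Rightarrow> 'a" where
  "blockcomp f \<theta> m 0 = id"
| "blockcomp f \<theta> m (Suc k) = f (\<theta> (m + k)) \<circ> blockcomp f \<theta> m k"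

definition attracting_nbhd :: "(nat \<Rightarrow> 'a::metric_space \<Rightarrow> 'a) \<Rightarrow> nat \<Rightarrow> 'a set \<Rightarrow> 'a set \<Rightarrow> bool" where
  "attracting_nbhd f N A U \<longleftrightarrow> open U \<and> A \<subseteq> U \<and>
     (\<forall>S. ne_compact S \<and> S \<subseteq> U \<longrightarrow> (\<lambda>k. hausdist ((hutch f N ^^ k) S) A) \<longlonglongrightarrow> 0)"

definition attractor :: "(nat \<Rightarrow> 'a::metric_space \<Rightarrow> 'a) \<Rightarrow> nat \<Rightarrow> 'a set \<Rightarrow> bool" where
  "attractor f N A \<longleftrightarrow> ne_compact A \<and> hutch f N A = A \<and> (\<exists>U. attracting_nbhd f N A U)"

definition basin :: "(nat \<Rightarrow> 'a::metric_space \<Rightarrow> 'a) \<Rightarrow> nat \<Rightarrow> 'a set \<Rightarrow> 'a set" where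
  "basin f N A = \<Union>{U. attracting_nbhd f N A U}"

definition coord_map :: "(nat \<Rightarrow> 'a::metric_space \<Rightarrow> 'a) \<Rightarrow> nat \<Rightarrow> 'a set \<Rightarrow> ((nat \<Rightarrow> nat) \<Rightarrow> 'a) \<Rightarrow> bool" where
  "coord_map f N A \<pi> \<longleftrightarrow> (\<forall>\<omega>\<in>words N. \<forall>C. ne_compact C \<and> C \<subseteq> basin f N A \<longrightarrow>
      (\<lambda>k. hausdist (fcomp f \<omega> k ` C) {\<pi> \<omega>}) \<longlonglongrightarrow> 0)"

definition point_fibred :: "(nat \<Rightarrow> 'a::metric_space \<Rightarrow> 'a) \<Rightarrow> nat \<Rightarrow> 'a set \<Rightarrow> bool" where
  "point_fibred f N A \<longleftrightarrow> (\<exists>\<pi>. coord_map f N A \<pi>)"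

definition disjunctive :: "nat \<Rightarrow> (nat \<Rightarrow> nat) \<Rightarrow> bool" where
  "disjunctive N \<theta> \<longleftrightarrow> (\<forall>w. set w \<subseteq> {1..N} \<longrightarrow> (\<exists>m. \<forall>i<length w. \<theta> (m + i) = w ! i))"

text \<open>omega_1...omega_L = theta_(m+L)...theta_(m+1), shifted to 0-based positions.\<close>
definition reversible :: "nat \<Rightarrow> 'a::topological_space set \<Rightarrow> ((nat \<Rightarrow> nat) \<Rightarrow> 'a) \<Rightarrow> (nat \<Rightarrow> nat) \<Rightarrow> bool" where
  "reversible N A \<pi> \<theta> \<longleftrightarrow> (\<exists>\<omega>\<in>words N. \<pi> \<omega> \<in> interior A \<and>
     (\<forall>M L. M > 0 \<and> L > 0 \<longrightarrow> (\<exists>m\<ge>M. \<forall>i<L. \<omega> i = \<theta> (m + L - 1 - i))))"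

text \<open>omega_1...omega_m = theta_m...theta_1, shifted to 0-based positions.\<close>
definition strongly_reversible :: "nat \<Rightarrow> 'a::topological_space set \<Rightarrow> ((nat \<Rightarrow> nat) \<Rightarrow> 'a) \<Rightarrow> (nat \<Rightarrow> nat) \<Rightarrow> bool" where
  "strongly_reversible N A \<pi> \<theta> \<longleftrightarrow> (\<exists>\<omega>\<in>words N. \<pi> \<omega> \<in> interior A \<and>
     (\<forall>M. M > 0 \<longrightarrow> (\<exists>m\<ge>M. \<forall>i<m. \<omega> i = \<theta> (m - 1 - i))))"

definition full :: "(nat \<Rightarrow> 'a::metric_space \<Rightarrow> 'a) \<Rightarrow> 'a set \<Rightarrow> (nat \<Rightarrow> nat) \<Rightarrow> bool" where
  "full f A \<theta> \<longleftrightarrow> (\<exists>A'. ne_compact A' \<and> A' \<subseteq> interior A \<and>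
     (\<forall>M. M > 0 \<longrightarrow> (\<exists>n m. n > m \<and> m \<ge> M \<and> blockcomp f \<theta> m (n - m) ` A \<subseteq> A')))"

end

theory Submission
  imports Defs "HOL-Library.Stream" "HOL-Library.Countable"
begin


lemma flat_stake:
  assumes ne: "\<forall>xs\<in>sset ws. xs \<noteq> []"
  shows "flat ws = concat (stake j ws) @- flat (sdrop j ws)"
  using ne
proof (induction j arbitrary: ws)
  case 0 then show ?case by simp
next
  case (Suc j)
  have "shd ws \<noteq> []" using Suc.prems by (simp add: shd_sset)
  then have "flat ws = shd ws @- flat (stl ws)" by (rule flat_unfold)
  also have "flat (stl ws) = concat (stake j (stl ws)) @- flat (sdrop j (stl ws))"
    using Suc.prems by (intro Suc.IH) (auto simp: stl_sset)
  finally show ?case by (simp add: shift_append)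
qed

lemma exists_disjunctive:
  assumes "N \<ge> 1"
  shows "\<exists>\<theta>\<in>words N. disjunctive N \<theta>"
proof -
  define e where "e = (\<lambda>j::nat. map (\<lambda>x. x mod N + 1) (from_nat j :: nat list) @ [1])"
  define ws where "ws = smap e nats"
  have ne: "\<forall>xs\<in>sset ws. xs \<noteq> []" by (auto simp: ws_def e_def stream.set_map)
  define \<theta> where "\<theta> = (\<lambda>n. flat ws !! n)"
  have "\<theta> \<in> words N"
  proof -
    { fix n
      have "\<theta> n \<in> sset (flat ws)" unfolding \<theta>_def by simp
      then have "\<theta> n \<in> (\<Union>xs \<in> sset ws. set xs)" using ne by simp
      then have "\<theta> n \<in> {1..N}" using assms
        by (auto simp: ws_def e_def stream.set_map Suc_le_eq) }
    then show ?thesis by (auto simp: words_def)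
  qed
  moreover have "disjunctive N \<theta>"
    unfolding disjunctive_def
  proof (intro allI impI)
    fix w :: "nat list" assume w: "set w \<subseteq> {1..N}"
    define j where "j = to_nat (map (\<lambda>x. x - 1) w)"
    have ej: "e j = w @ [1]"
    proof -
      have "map (\<lambda>x. (x - 1) mod N + 1) w = w"
        using w by (induction w) auto
      then show ?thesis by (simp add: e_def j_def comp_def)
    qed
    define m where "m = length (concat (stake j ws))"
    have fl: "flat ws = concat (stake j ws) @- flat (sdrop j ws)" using ne by (rule flat_stake)
    have sh: "shd (sdrop j ws) = e j" by (simp add: ws_def)
    have "flat (sdrop j ws) = shd (sdrop j ws) @- flat (stl (sdrop j ws))"
      by (rule flat_unfold) (simp add: ws_def ej)
    then have F: "flat ws = concat (stake j ws) @- (e j @- flat (stl (sdrop j ws)))"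
      using fl sh by (simp only:)
    have "\<forall>i<length w. \<theta> (m + i) = w ! i"
    proof (intro allI impI)
      fix i assume i: "i < length w"
      have "\<theta> (m + i) = (e j @- flat (stl (sdrop j ws))) !! i"
        unfolding \<theta>_def F m_def by (subst shift_snth_ge) auto
      also have "\<dots> = e j ! i" using i ej by (subst shift_snth_less) auto
      also have "\<dots> = w ! i" using i ej by (simp add: nth_append)
      finally show "\<theta> (m + i) = w ! i" .
    qed
    then show "\<exists>m. \<forall>i<length w. \<theta> (m + i) = w ! i" by blast
  qed
  ultimately show ?thesis by blast
qed

lemma part1:
  assumes "N \<ge> 2"
  shows "infinite {\<theta>\<in>words N. disjunctive N \<theta>}"
proof -
  obtain \<theta> where th: "\<theta> \<in> words N" "disjunctive N \<theta>"
    using exists_disjunctive[of N] assms by auto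
  define g where "g = (\<lambda>k n. if n < k then 1 else if n = k then 2 else \<theta> (n - k - 1))"
  have inj: "inj g"
  proof (rule injI)
    fix j k assume eq: "g j = g k"
    show "j = k"
    proof (rule ccontr)
      assume "j \<noteq> k"
      then consider "j < k" | "k < j" by linarith
      then show False
      proof cases
        case 1 then have "g k j = 1" "g j j = 2" by (auto simp: g_def)
        with eq show False by simp
      next
        case 2 then have "g j k = 1" "g k k = 2" by (auto simp: g_def)
        with eq show False by simp
      qed
    qed
  qed
  have "range g \<subseteq> {\<theta>\<in>words N. disjunctive N \<theta>}"
  proof safe
    fix k
    show "g k \<in> words N" using th(1) assms by (auto simp: words_def g_def)
    show "disjunctive N (g k)"
      unfolding disjunctive_def
    proof (intro allI impI)
      fix w :: "nat list" assume "set w \<subseteq> {1..N}"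
      then obtain m where m: "\<forall>i<length w. \<theta> (m + i) = w ! i"
        using th(2) unfolding disjunctive_def by blast
      have "\<forall>i<length w. g k (m + k + 1 + i) = w ! i"
        using m by (auto simp: g_def)
      then show "\<exists>m. \<forall>i<length w. g k (m + i) = w ! i" by blast
    qed
  qed
  moreover have "infinite (range g)" using inj by (simp add: range_inj_infinite)
  ultimately show ?thesis using finite_subset by blast
qed




lemma hausdist_point_le:
  assumes "compact S" "y \<in> S"
  shows "dist y x \<le> hausdist S {x}"
proof -
  have "bounded S" using assms(1) by (rule compact_imp_bounded)
  then obtain b where b: "\<forall>z\<in>S. dist x z \<le> b" using bounded_any_center by blast
  have bdd: "bdd_above ((\<lambda>z. infdist z {x}) ` S)"
  proof (rule bdd_aboveI2)
    fix z assume "z \<in> S"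
    then have "dist x z \<le> b" using b by blast
    then show "infdist z {x} \<le> b" by (simp add: infdist_singleton dist_commute)
  qed
  have "dist y x = infdist y {x}" by (simp add: infdist_singleton)
  also have "\<dots> \<le> (SUP z\<in>S. infdist z {x})" using bdd assms(2) by (rule cSUP_upper2) simp
  also have "\<dots> \<le> hausdist S {x}" by (simp add: hausdist_def)
  finally show ?thesis .
qed

lemma hausdist_tendsto_point:
  assumes "\<And>k. y k \<in> S k" "\<And>k. compact (S k)" "(\<lambda>k. hausdist (S k) {p}) \<longlonglongrightarrow> 0"
  shows "y \<longlonglongrightarrow> p"
proof -
  have "(\<lambda>k. dist (y k) p) \<longlonglongrightarrow> 0"
  proof (rule tendsto_sandwich[OF _ _ tendsto_const assms(3)])
    show "\<forall>\<^sub>F k in sequentially. 0 \<le> dist (y k) p" by simp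
    show "\<forall>\<^sub>F k in sequentially. dist (y k) p \<le> hausdist (S k) {p}"
      using hausdist_point_le[OF assms(2) assms(1)] by (intro always_eventually) blast
  qed
  then show ?thesis by (rule tendsto_dist_iff[THEN iffD2])
qed

lemma fcomp_cong: "(\<And>i. i < k \<Longrightarrow> \<omega> i = \<omega>' i) \<Longrightarrow> fcomp f \<omega> k = fcomp f \<omega>' k"
  by (induction k) auto

lemma blockcomp_Suc': "blockcomp f \<theta> m (Suc k) = blockcomp f \<theta> (Suc m) k \<circ> f (\<theta> m)"
proof (induction k arbitrary: m)
  case 0 then show ?case by simp
next
  case (Suc k)
  have "blockcomp f \<theta> m (Suc (Suc k)) = f (\<theta> (m + Suc k)) \<circ> blockcomp f \<theta> m (Suc k)"
    by (simp only: blockcomp.simps)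
  also have "\<dots> = f (\<theta> (m + Suc k)) \<circ> (blockcomp f \<theta> (Suc m) k \<circ> f (\<theta> m))"
    by (simp only: Suc.IH)
  also have "\<dots> = (f (\<theta> (Suc m + k)) \<circ> blockcomp f \<theta> (Suc m) k) \<circ> f (\<theta> m)"
    by (simp add: comp_assoc)
  also have "\<dots> = blockcomp f \<theta> (Suc m) (Suc k) \<circ> f (\<theta> m)"
    by (simp only: blockcomp.simps)
  finally show ?case .
qed

lemma blockcomp_fcomp: "blockcomp f \<theta> m k = fcomp f (\<lambda>i. \<theta> (m + k - 1 - i)) k"
proof (induction k arbitrary: m)
  case 0 then show ?case by simp
next
  case (Suc k)
  have 1: "blockcomp f \<theta> m (Suc k) = fcomp f (\<lambda>i. \<theta> (Suc m + k - 1 - i)) k \<circ> f (\<theta> m)"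
    by (simp only: blockcomp_Suc' Suc.IH)
  have 2: "fcomp f (\<lambda>i. \<theta> (Suc m + k - 1 - i)) k = fcomp f (\<lambda>i. \<theta> (m + Suc k - 1 - i)) k"
    by (rule fcomp_cong) (simp add: Suc_diff_le)
  show ?case unfolding 1 2 fcomp.simps(2) by simp
qed

locale ifs =
  fixes f :: "nat \<Rightarrow> 'a::metric_space \<Rightarrow> 'a" and N :: nat and A :: "'a set"
    and \<pi> :: "(nat \<Rightarrow> nat) \<Rightarrow> 'a"
  assumes cont: "\<And>i. i \<in> {1..N} \<Longrightarrow> continuous_on UNIV (f i)"
    and attr: "attractor f N A"
    and coord: "coord_map f N A \<pi>"
begin

lemma A_compact: "compact A" and A_ne: "A \<noteq> {}" and A_inv: "hutch f N A = A"
  using attr by (auto simp: attractor_def ne_compact_def)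

lemma f_A: "i \<in> {1..N} \<Longrightarrow> f i ` A \<subseteq> A"
  using A_inv unfolding hutch_def by blast

lemma A_basin: "A \<subseteq> basin f N A"
  using attr unfolding attractor_def basin_def attracting_nbhd_def by blast

lemma fcomp_cont: "\<omega> \<in> words N \<Longrightarrow> continuous_on UNIV (fcomp f \<omega> k)"
proof (induction k)
  case 0 then show ?case by (simp add: continuous_on_id)
next
  case (Suc k)
  have "continuous_on UNIV (f (\<omega> k))" using Suc.prems cont by (auto simp: words_def)
  then show ?case using Suc
    by (simp add: continuous_on_compose2[of UNIV "fcomp f \<omega> k" UNIV "f (\<omega> k)"])
qed

lemma fcomp_img_compact: "\<omega> \<in> words N \<Longrightarrow> compact (fcomp f \<omega> k ` A)"
  using fcomp_cont A_compact by (metis compact_continuous_image continuous_on_subset top_greatest)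

lemma fcomp_mono: "\<omega> \<in> words N \<Longrightarrow> fcomp f \<omega> (k + j) ` A \<subseteq> fcomp f \<omega> k ` A"
proof (induction j)
  case 0 then show ?case by simp
next
  case (Suc j)
  have "f (\<omega> (k + j)) ` A \<subseteq> A" using Suc.prems f_A by (auto simp: words_def)
  have "fcomp f \<omega> (k + Suc j) ` A = fcomp f \<omega> (k + j) ` (f (\<omega> (k + j)) ` A)"
    by (simp add: image_comp)
  also have "\<dots> \<subseteq> fcomp f \<omega> (k + j) ` A" using \<open>f (\<omega> (k + j)) ` A \<subseteq> A\<close> by (rule image_mono)
  finally show ?case using Suc.IH[OF Suc.prems] by (rule order.trans)
qed

lemma fcomp_A: "\<omega> \<in> words N \<Longrightarrow> fcomp f \<omega> k ` A \<subseteq> A"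
  using fcomp_mono[of \<omega> 0 k] by simp

lemma pi_lim: "\<omega> \<in> words N \<Longrightarrow> (\<lambda>k. hausdist (fcomp f \<omega> k ` A) {\<pi> \<omega>}) \<longlonglongrightarrow> 0"
  using coord A_basin A_compact A_ne unfolding coord_map_def ne_compact_def by blast

lemma pi_in_closed:
  assumes w: "\<omega> \<in> words N" and B: "closed B" and meet: "\<And>k. fcomp f \<omega> k ` A \<inter> B \<noteq> {}"
  shows "\<pi> \<omega> \<in> B"
proof -
  have "\<forall>k. \<exists>y. y \<in> fcomp f \<omega> k ` A \<inter> B" using meet by blast
  then obtain y where y: "\<And>k. y k \<in> fcomp f \<omega> k ` A \<inter> B" by metis
  have "y \<longlonglongrightarrow> \<pi> \<omega>"
    by (rule hausdist_tendsto_point[OF _ fcomp_img_compact[OF w] pi_lim[OF w]]) (use y in blast)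
  moreover have "\<forall>k. y k \<in> B" using y by blast
  ultimately show ?thesis using closed_sequentially[OF B] by blast
qed

lemma pi_A: "\<omega> \<in> words N \<Longrightarrow> \<pi> \<omega> \<in> A"
proof (rule pi_in_closed)
  show "closed A" using A_compact by (rule compact_imp_closed)
  fix k assume w: "\<omega> \<in> words N"
  obtain a where "a \<in> A" using A_ne by blast
  then have "fcomp f \<omega> k a \<in> fcomp f \<omega> k ` A \<inter> A" using fcomp_A[OF w, of k] by blast
  then show "fcomp f \<omega> k ` A \<inter> A \<noteq> {}" by blast
qed

lemma pi_surj:
  assumes x: "x \<in> A" shows "\<exists>\<omega>\<in>words N. \<pi> \<omega> = x"
proof -
  have "\<forall>y\<in>A. \<exists>p. fst p \<in> {1..N} \<and> snd p \<in> A \<and> y = f (fst p) (snd p)"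
  proof
    fix y assume "y \<in> A"
    then have "y \<in> (\<Union>i\<in>{1..N}. f i ` A)" using A_inv unfolding hutch_def by simp
    then obtain i z where "i \<in> {1..N}" "z \<in> A" "y = f i z" by blast
    then show "\<exists>p. fst p \<in> {1..N} \<and> snd p \<in> A \<and> y = f (fst p) (snd p)"
      by (intro exI[of _ "(i, z)"]) simp
  qed
  from bchoice[OF this] obtain g where g0: "\<forall>y\<in>A. fst (g y) \<in> {1..N} \<and> snd (g y) \<in> A \<and> y = f (fst (g y)) (snd (g y))"
    by blast
  have g: "fst (g y) \<in> {1..N} \<and> snd (g y) \<in> A \<and> y = f (fst (g y)) (snd (g y))" if "y \<in> A" for y
    using g0 that by blast
  define xs where "xs = (\<lambda>k. ((snd \<circ> g) ^^ k) x)"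
  have xsA: "xs k \<in> A" for k
  proof (induction k)
    case 0 then show ?case by (simp add: xs_def x)
  next
    case (Suc k)
    have "xs (Suc k) = snd (g (xs k))" by (simp add: xs_def)
    then show ?case using conjunct1[OF conjunct2[OF g[OF Suc.IH]]] by simp
  qed
  define \<omega> where "\<omega> = (\<lambda>k. fst (g (xs k)))"
  have w: "\<omega> \<in> words N"
  proof -
    have "\<omega> k \<in> {1..N}" for k unfolding \<omega>_def by (rule conjunct1[OF g[OF xsA[of k]]])
    then show ?thesis unfolding words_def by blast
  qed
  have eq: "fcomp f \<omega> k (xs k) = x" for k
  proof (induction k)
    case 0 then show ?case by (simp add: xs_def)
  next
    case (Suc k)
    have e1: "xs (Suc k) = snd (g (xs k))" by (simp add: xs_def)
    have "f (\<omega> k) (xs (Suc k)) = xs k" unfolding \<omega>_def e1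
      by (rule conjunct2[OF conjunct2[OF g[OF xsA[of k]]], symmetric])
    then show ?case using Suc by simp
  qed
  have mem: "x \<in> fcomp f \<omega> k ` A" for k
    using image_eqI[of x "fcomp f \<omega> k" "xs k" A] eq[of k] xsA[of k] by simp
  have "(\<lambda>k. x) \<longlonglongrightarrow> \<pi> \<omega>"
    by (rule hausdist_tendsto_point[OF mem fcomp_img_compact[OF w] pi_lim[OF w]])
  then have "x = \<pi> \<omega>" by (rule LIMSEQ_const_iff[THEN iffD1])
  then have "\<pi> \<omega> = x" by simp
  then show ?thesis using w by blast
qed

lemma cylinder:
  assumes w0: "\<omega>0 \<in> words N" and int: "\<pi> \<omega>0 \<in> interior A"
  shows "\<exists>k\<ge>1. fcomp f \<omega>0 k ` A \<subseteq> interior A \<and>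
     (\<forall>\<omega>\<in>words N. (\<forall>i<k. \<omega> i = \<omega>0 i) \<longrightarrow> \<pi> \<omega> \<in> interior A)"
proof -
  let ?x = "\<pi> \<omega>0"
  obtain e where e: "e > 0" "ball ?x e \<subseteq> A" using int mem_interior by blast
  have ballint: "ball ?x e \<subseteq> interior A" using e(2) by (simp add: interior_maximal)
  obtain K where K: "\<And>k. k \<ge> K \<Longrightarrow> hausdist (fcomp f \<omega>0 k ` A) {?x} < e/2"
  proof -
    have "e/2 > 0" using e(1) by simp
    then obtain K where "\<forall>k\<ge>K. dist (hausdist (fcomp f \<omega>0 k ` A) {?x}) 0 < e/2"
      using pi_lim[OF w0] unfolding lim_sequentially by blast
    then have "\<forall>k\<ge>K. hausdist (fcomp f \<omega>0 k ` A) {?x} < e/2"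
      by (auto simp: dist_real_def)
    then show ?thesis using that by blast
  qed
  define k where "k = max K 1"
  have sub: "fcomp f \<omega>0 k ` A \<subseteq> cball ?x (e/2)"
  proof
    fix y assume y: "y \<in> fcomp f \<omega>0 k ` A"
    have "dist y ?x \<le> hausdist (fcomp f \<omega>0 k ` A) {?x}"
      by (rule hausdist_point_le[OF fcomp_img_compact[OF w0] y])
    also have "\<dots> < e/2" using K k_def by simp
    finally show "y \<in> cball ?x (e/2)" by (simp add: dist_commute)
  qed
  have cb: "cball ?x (e/2) \<subseteq> interior A" 
  proof
    fix y assume "y \<in> cball ?x (e/2)"
    then have "y \<in> ball ?x e" using e(1) by simp
    then show "y \<in> interior A" by (rule subsetD[OF ballint])
  qed
  show ?thesis
  proof (intro exI[of _ k] conjI ballI impI)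
    show "1 \<le> k" by (simp add: k_def)
    show "fcomp f \<omega>0 k ` A \<subseteq> interior A" using sub cb by blast
    fix \<omega> assume w: "\<omega> \<in> words N" and pre: "\<forall>i<k. \<omega> i = \<omega>0 i"
    have eqk: "fcomp f \<omega> k = fcomp f \<omega>0 k" using pre by (intro fcomp_cong) auto
    have "\<pi> \<omega> \<in> cball ?x (e/2)"
    proof (rule pi_in_closed[OF w closed_cball])
      fix j
      have "fcomp f \<omega> (k + j) ` A \<subseteq> cball ?x (e/2)"
      proof -
        have "fcomp f \<omega> (k + j) ` A \<subseteq> fcomp f \<omega> k ` A" by (rule fcomp_mono[OF w])
        also have "\<dots> = fcomp f \<omega>0 k ` A" by (simp only: eqk)
        also have "\<dots> \<subseteq> cball ?x (e/2)" by (rule sub)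
        finally show ?thesis .
      qed
      note c1 = this
      obtain a where a: "a \<in> A" using A_ne by blast
      have y1: "fcomp f \<omega> (k + j) a \<in> cball ?x (e/2)" by (rule subsetD[OF c1 imageI[OF a]])
      have "fcomp f \<omega> (k + j) ` A \<subseteq> fcomp f \<omega> j ` A"
        using fcomp_mono[OF w, of j k] by (simp add: add.commute)
      then have y2: "fcomp f \<omega> (k + j) a \<in> fcomp f \<omega> j ` A" by (rule subsetD[OF _ imageI[OF a]])
      show "fcomp f \<omega> j ` A \<inter> cball ?x (e/2) \<noteq> {}" using y1 y2 by (metis IntI empty_iff)
    qed
    then show "\<pi> \<omega> \<in> interior A" by (rule subsetD[OF cb])
  qed
qed

end



lemma part3:
  assumes "strongly_reversible N A \<pi> \<theta>"
  shows "reversible N A \<pi> \<theta>"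
proof -
  obtain \<omega> where w: "\<omega> \<in> words N" "\<pi> \<omega> \<in> interior A"
    and sr: "\<And>M. M > 0 \<Longrightarrow> \<exists>m\<ge>M. \<forall>i<m. \<omega> i = \<theta> (m - 1 - i)"
    using assms unfolding strongly_reversible_def by blast
  have "\<exists>m\<ge>M. \<forall>i<L. \<omega> i = \<theta> (m + L - 1 - i)" if "M > 0" "L > 0" for M L
  proof -
    have "M + L > 0" using that by simp
    from sr[OF this] obtain m' where m': "m' \<ge> M + L" "\<forall>i<m'. \<omega> i = \<theta> (m' - 1 - i)"
      by blast
    have "\<forall>i<L. \<omega> i = \<theta> ((m' - L) + L - 1 - i)"
      using m' by auto
    moreover have "m' - L \<ge> M" using m' by simp
    ultimately show ?thesis by blast
  qed
  then show ?thesis unfolding reversible_def using w by blast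
qed

context ifs
begin

lemma words_val: "\<theta> \<in> words N \<Longrightarrow> \<theta> i \<in> {1..N}"
  by (simp add: words_def)

lemma part2:
  assumes intne: "interior A \<noteq> {}" and th: "\<theta> \<in> words N" and dj: "disjunctive N \<theta>"
  shows "strongly_reversible N A \<pi> \<theta>"
proof -
  obtain x where x: "x \<in> interior A" using intne by blast
  then have "x \<in> A" using interior_subset by blast
  then obtain \<omega>0 where w0: "\<omega>0 \<in> words N" "\<pi> \<omega>0 = x" using pi_surj by blast
  obtain k where k: "k \<ge> 1"
    and cyl: "\<forall>\<omega>\<in>words N. (\<forall>i<k. \<omega> i = \<omega>0 i) \<longrightarrow> \<pi> \<omega> \<in> interior A"
    using cylinder[OF w0(1)] w0(2) x by blast
  have occ: "\<exists>p. \<forall>i<length w. \<theta> (p + i) = w ! i" if "set w \<subseteq> {1..N}" for w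
    using dj that unfolding disjunctive_def by blast
  define w1 where "w1 = map (\<lambda>i. \<omega>0 (k - 1 - i)) [0..<k]"
  have "set w1 \<subseteq> {1..N}" using w0(1) by (auto simp: w1_def words_def)
  then obtain p0 where p0: "\<forall>i<length w1. \<theta> (p0 + i) = w1 ! i" using occ by blast
  define m0 where "m0 = p0 + k"
  have m0: "\<forall>i<k. \<theta> (m0 - 1 - i) = \<omega>0 i"
  proof (intro allI impI)
    fix i assume i: "i < k"
    have e: "m0 - 1 - i = p0 + (k - 1 - i)" using i by (simp add: m0_def)
    have "\<theta> (m0 - 1 - i) = \<theta> (p0 + (k - 1 - i))" by (simp only: e)
    also have "\<dots> = w1 ! (k - 1 - i)"
    proof -
      have "k - 1 - i < length w1" using i by (simp add: w1_def)
      then show ?thesis using p0 by blast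
    qed
    also have "w1 ! (k - 1 - i) = \<omega>0 i" using i by (simp add: w1_def)
    finally show "\<theta> (m0 - 1 - i) = \<omega>0 i" .
  qed
  have step: "\<exists>m'. m' > m \<and> (\<forall>i<m. \<theta> (m' - 1 - i) = \<theta> (m - 1 - i))" for m
  proof (cases "m = 0")
    case True then show ?thesis by (intro exI[of _ 1]) simp
  next
    case False
    define v where "v = map \<theta> [0..<m] @ map \<theta> [0..<m]"
    have "set v \<subseteq> {1..N}" using th by (auto simp: v_def words_def)
    then obtain p where p: "\<forall>i<length v. \<theta> (p + i) = v ! i" using occ by blast
    have "\<forall>i<m. \<theta> (p + 2 * m - 1 - i) = \<theta> (m - 1 - i)"
    proof (intro allI impI)
      fix i assume i: "i < m"
      have e: "p + 2 * m - 1 - i = p + (m + (m - 1 - i))" using i by simp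
      have "\<theta> (p + 2 * m - 1 - i) = \<theta> (p + (m + (m - 1 - i)))" by (simp only: e)
      also have "\<dots> = v ! (m + (m - 1 - i))"
      proof -
        have "m + (m - 1 - i) < length v" using i by (simp add: v_def)
        then show ?thesis using p by blast
      qed
      also have "v ! (m + (m - 1 - i)) = \<theta> (m - 1 - i)"
      proof -
        have "v ! (length (map \<theta> [0..<m]) + (m - 1 - i)) = map \<theta> [0..<m] ! (m - 1 - i)"
          unfolding v_def by (rule nth_append_length_plus)
        then show ?thesis using i by simp
      qed
      finally show "\<theta> (p + 2 * m - 1 - i) = \<theta> (m - 1 - i)" .
    qed
    moreover have "p + 2 * m > m" using False by simp
    ultimately show ?thesis by blast
  qed
  have "\<forall>m. \<exists>m'. m' > m \<and> (\<forall>i<m. \<theta> (m' - 1 - i) = \<theta> (m - 1 - i))"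
    using step by (rule allI)
  from choice[OF this] obtain nx where
    nx0: "\<forall>m. nx m > m \<and> (\<forall>i<m. \<theta> (nx m - 1 - i) = \<theta> (m - 1 - i))" ..
  have nx: "nx m > m \<and> (\<forall>i<m. \<theta> (nx m - 1 - i) = \<theta> (m - 1 - i))" for m
    using nx0 by (rule spec)
  define ms where "ms = (\<lambda>j. (nx ^^ j) m0)"
  have ms0: "ms 0 = m0" by (simp add: ms_def)
  have msS: "ms (Suc j) = nx (ms j)" for j by (simp add: ms_def)
  have msge: "ms j \<ge> j + m0" for j
  proof (induction j)
    case 0 then show ?case by (simp add: ms0)
  next
    case (Suc j) then show ?case using nx[of "ms j"] msS[of j] by simp
  qed
  have chain: "ms j \<le> ms (j + d) \<and> (\<forall>i<ms j. \<theta> (ms (j + d) - 1 - i) = \<theta> (ms j - 1 - i))" for j d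
  proof (induction d)
    case 0 then show ?case by simp
  next
    case (Suc d)
    have a: "ms (j + Suc d) = nx (ms (j + d))" using msS[of "j + d"] by simp
    have b: "ms (j + d) < ms (j + Suc d)" using a nx[of "ms (j + d)"] by simp
    have c: "\<forall>i<ms j. \<theta> (ms (j + Suc d) - 1 - i) = \<theta> (ms j - 1 - i)"
    proof (intro allI impI)
      fix i assume i: "i < ms j"
      then have "i < ms (j + d)" using Suc.IH by linarith
      then have "\<theta> (nx (ms (j + d)) - 1 - i) = \<theta> (ms (j + d) - 1 - i)" using nx by blast
      then show "\<theta> (ms (j + Suc d) - 1 - i) = \<theta> (ms j - 1 - i)" using Suc.IH i a by simp
    qed
    show ?case using b c Suc.IH by simp
  qed
  define \<omega> where "\<omega> = (\<lambda>i. \<theta> (ms i - 1 - i))"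
  have key: "\<omega> i = \<theta> (ms j - 1 - i)" if i: "i < ms j" for i j
  proof (cases "i \<le> j")
    case True
    have "i < ms i" using msge[of i] k m0_def by simp
    then have "\<theta> (ms (i + (j - i)) - 1 - i) = \<theta> (ms i - 1 - i)" using chain[of i "j - i"] by blast
    then show ?thesis using True by (simp add: \<omega>_def)
  next
    case False
    then have "\<theta> (ms (j + (i - j)) - 1 - i) = \<theta> (ms j - 1 - i)" using chain[of j "i - j"] i by blast
    then show ?thesis using False by (simp add: \<omega>_def)
  qed
  have w: "\<omega> \<in> words N" using th by (simp add: words_def \<omega>_def)
  have "\<forall>i<k. \<omega> i = \<omega>0 i"
  proof (intro allI impI)
    fix i assume i: "i < k"
    then have "i < ms 0" using ms0 m0_def by simp
    then have "\<omega> i = \<theta> (ms 0 - 1 - i)" by (rule key)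
    then show "\<omega> i = \<omega>0 i" using m0 i ms0 by simp
  qed
  then have int: "\<pi> \<omega> \<in> interior A" using cyl w by blast
  have "\<exists>m\<ge>M. \<forall>i<m. \<omega> i = \<theta> (m - 1 - i)" for M
  proof (intro exI[of _ "ms M"] conjI allI impI)
    show "M \<le> ms M" using msge[of M] by simp
    fix i assume "i < ms M" then show "\<omega> i = \<theta> (ms M - 1 - i)" by (rule key)
  qed
  then show ?thesis unfolding strongly_reversible_def using w int by blast
qed

lemma part4a:
  assumes th: "\<theta> \<in> words N" and rv: "reversible N A \<pi> \<theta>"
  shows "full f A \<theta>"
proof -
  obtain \<omega> where w: "\<omega> \<in> words N" "\<pi> \<omega> \<in> interior A"
    and r: "\<And>M L. M > 0 \<Longrightarrow> L > 0 \<Longrightarrow> \<exists>m\<ge>M. \<forall>i<L. \<omega> i = \<theta> (m + L - 1 - i)"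
    using rv unfolding reversible_def by blast
  obtain k where k: "k \<ge> 1" and sub: "fcomp f \<omega> k ` A \<subseteq> interior A"
    using cylinder[OF w] by blast
  define A' where "A' = fcomp f \<omega> k ` A"
  have ne: "ne_compact A'" unfolding ne_compact_def A'_def
    using fcomp_img_compact[OF w(1)] A_ne by simp
  have "\<exists>n m. n > m \<and> m \<ge> M \<and> blockcomp f \<theta> m (n - m) ` A \<subseteq> A'" if M: "M > 0" for M
  proof -
    obtain m where m: "m \<ge> M" "\<forall>i<k. \<omega> i = \<theta> (m + k - 1 - i)" using r[OF M, of k] k by auto
    have "blockcomp f \<theta> m k = fcomp f (\<lambda>i. \<theta> (m + k - 1 - i)) k" by (rule blockcomp_fcomp)
    also have "\<dots> = fcomp f \<omega> k" using m(2) by (intro fcomp_cong) simp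
    finally have "blockcomp f \<theta> m ((m + k) - m) ` A \<subseteq> A'" by (simp add: A'_def)
    moreover have "m + k > m" using k by simp
    ultimately show ?thesis using m(1) by blast
  qed
  then show ?thesis unfolding full_def using ne sub A'_def by blast
qed

end



context ifs
begin

lemma part4b:
  assumes th: "\<theta> \<in> words N" and fu: "full f A \<theta>"
  shows "reversible N A \<pi> \<theta>"
proof -
  obtain A' where ne: "ne_compact A'" and sub: "A' \<subseteq> interior A"
    and bl: "\<And>M. M > 0 \<Longrightarrow> \<exists>n m. n > m \<and> m \<ge> M \<and> blockcomp f \<theta> m (n - m) ` A \<subseteq> A'"
    using fu unfolding full_def by blast
  define G where "G = {n. \<exists>m<n. blockcomp f \<theta> m (n - m) ` A \<subseteq> A'}"
  have Gunb: "\<exists>n\<in>G. n \<ge> M" for M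
  proof -
    obtain n m where "n > m" "m \<ge> Suc M" "blockcomp f \<theta> m (n - m) ` A \<subseteq> A'"
      using bl[of "Suc M"] by auto
    then have "n \<in> G" "n \<ge> M" unfolding G_def by auto
    then show ?thesis by blast
  qed
  define S where "S = (\<lambda>u. {n\<in>G. length u < n \<and> (\<forall>i<length u. \<theta> (n - 1 - i) = u ! i)})"
  define good where "good = (\<lambda>u. infinite (S u))"
  have good0: "good []"
  proof -
    have "S [] = G - {0}" by (auto simp: S_def)
    moreover have "infinite G" using Gunb unfolding infinite_nat_iff_unbounded_le by (metis)
    ultimately show ?thesis unfolding good_def by simp
  qed
  have ext: "\<exists>c. c \<in> {1..N} \<and> good (u @ [c])" if gu: "good u" for u
  proof (rule ccontr)
    assume nc: "\<not> ?thesis"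
    have "S u \<subseteq> (\<Union>c\<in>{1..N}. S (u @ [c])) \<union> {Suc (length u)}"
    proof
      fix n assume n: "n \<in> S u"
      show "n \<in> (\<Union>c\<in>{1..N}. S (u @ [c])) \<union> {Suc (length u)}"
      proof (cases "n = Suc (length u)")
        case True then show ?thesis by simp
      next
        case False
        define c where "c = \<theta> (n - 1 - length u)"
        have c: "c \<in> {1..N}" using th by (simp add: c_def words_def)
        have "n \<in> S (u @ [c])"
          using n False unfolding S_def c_def by (auto simp: nth_append less_Suc_eq)
        then show ?thesis using c by blast
      qed
    qed
    moreover have "finite ((\<Union>c\<in>{1..N}. S (u @ [c])) \<union> {Suc (length u)})"
      using nc unfolding good_def by auto
    ultimately have "finite (S u)" by (rule finite_subset)
    then show False using gu unfolding good_def by simp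
  qed
  define nc where "nc = (\<lambda>u. SOME c. c \<in> {1..N} \<and> good (u @ [c]))"
  have nc: "good u \<Longrightarrow> nc u \<in> {1..N} \<and> good (u @ [nc u])" for u
    unfolding nc_def using ext by (rule someI_ex)
  define us where "us = rec_nat [] (\<lambda>_ u. u @ [nc u])"
  have us0: "us 0 = []" by (simp add: us_def)
  have usS: "us (Suc k) = us k @ [nc (us k)]" for k by (simp add: us_def)
  have usg: "good (us k) \<and> length (us k) = k" for k
  proof (induction k)
    case 0 then show ?case using good0 us0 by simp
  next
    case (Suc k) then show ?case using nc[of "us k"] usS[of k] by simp
  qed
  define \<omega> where "\<omega> = (\<lambda>k. nc (us k))"
  have w: "\<omega> \<in> words N" unfolding words_def \<omega>_def using nc usg by blast
  have usnth: "\<forall>i<k. us k ! i = \<omega> i" for k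
  proof (induction k)
    case 0 then show ?case by simp
  next
    case (Suc k)
    show ?case
    proof (intro allI impI)
      fix i assume i: "i < Suc k"
      show "us (Suc k) ! i = \<omega> i"
      proof (cases "i < k")
        case True then show ?thesis using Suc.IH usg[of k] by (simp add: usS nth_append)
      next
        case False then have "i = k" using i by simp
        then show ?thesis using usg[of k] by (simp add: usS nth_append \<omega>_def)
      qed
    qed
  qed
  have SL: "infinite {n\<in>G. L < n \<and> (\<forall>i<L. \<theta> (n - 1 - i) = \<omega> i)}" for L
  proof -
    have "{n\<in>G. L < n \<and> (\<forall>i<L. \<theta> (n - 1 - i) = \<omega> i)} = S (us L)"
      using usg[of L] usnth[of L] unfolding S_def by auto
    then show ?thesis using usg[of L] unfolding good_def by simp
  qed
  have "\<pi> \<omega> \<in> A'"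
  proof (rule pi_in_closed[OF w])
    show "closed A'" using ne by (simp add: ne_compact_def compact_imp_closed)
    fix L
    obtain n where n: "n \<in> G" "L < n" "\<forall>i<L. \<theta> (n - 1 - i) = \<omega> i"
      using SL[of L] not_finite_existsD by blast
    then obtain m where m: "m < n" "blockcomp f \<theta> m (n - m) ` A \<subseteq> A'"
      unfolding G_def by blast
    define l where "l = n - m"
    define \<rho> where "\<rho> = (\<lambda>i. \<theta> (n - 1 - i))"
    have \<rho>w: "\<rho> \<in> words N" using th by (simp add: words_def \<rho>_def)
    have "blockcomp f \<theta> m l = fcomp f (\<lambda>i. \<theta> (m + l - 1 - i)) l" by (rule blockcomp_fcomp)
    also have "(\<lambda>i. \<theta> (m + l - 1 - i)) = \<rho>" using m(1) by (simp add: l_def \<rho>_def)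
    finally have bl\<rho>: "fcomp f \<rho> l ` A \<subseteq> A'" using m(2) l_def by simp
    obtain a where a: "a \<in> A" using A_ne by blast
    show "fcomp f \<omega> L ` A \<inter> A' \<noteq> {}"
    proof (cases "l \<le> L")
      case True
      have "fcomp f \<omega> (l + (L - l)) ` A \<subseteq> fcomp f \<omega> l ` A" by (rule fcomp_mono[OF w])
      moreover have "fcomp f \<omega> l = fcomp f \<rho> l"
        using True n(3) by (intro fcomp_cong) (simp add: \<rho>_def)
      ultimately have "fcomp f \<omega> L ` A \<subseteq> A'" using True bl\<rho> by simp
      moreover have "fcomp f \<omega> L a \<in> fcomp f \<omega> L ` A" using a by (rule imageI)
      ultimately show ?thesis by blast
    next
      case False
      have "fcomp f \<rho> (L + (l - L)) ` A \<subseteq> fcomp f \<rho> L ` A" by (rule fcomp_mono[OF \<rho>w])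
      moreover have "fcomp f \<rho> L = fcomp f \<omega> L"
        using n(3) by (intro fcomp_cong) (simp add: \<rho>_def)
      ultimately have s1: "fcomp f \<rho> l ` A \<subseteq> fcomp f \<omega> L ` A" using False by simp
      have "fcomp f \<rho> l a \<in> fcomp f \<rho> l ` A" using a by (rule imageI)
      then show ?thesis using s1 bl\<rho> by blast
    qed
  qed
  then have int: "\<pi> \<omega> \<in> interior A" using sub by blast
  have "\<exists>m\<ge>M. \<forall>i<L. \<omega> i = \<theta> (m + L - 1 - i)" if "M > 0" "L > 0" for M L
  proof -
    obtain n where n: "n \<in> G" "L < n" "\<forall>i<L. \<theta> (n - 1 - i) = \<omega> i" "n \<ge> M + L"
      using SL[of L] unfolding infinite_nat_iff_unbounded_le by blast
    have "\<forall>i<L. \<omega> i = \<theta> ((n - L) + L - 1 - i)" using n by simp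
    moreover have "n - L \<ge> M" using n by simp
    ultimately show ?thesis by blast
  qed
  then show ?thesis unfolding reversible_def using w int by blast
qed

end

theorem mainTheorem1:
  fixes f :: "nat \<Rightarrow> 'a::complete_space \<Rightarrow> 'a"
    and N :: nat
    and A :: "'a set"
    and \<pi> :: "(nat \<Rightarrow> nat) \<Rightarrow> 'a"
  assumes cont: "\<And>i. i \<in> {1..N} \<Longrightarrow> continuous_on UNIV (f i)"
    and attr: "attractor f N A"
    and pf: "point_fibred f N A"
    and coord: "coord_map f N A \<pi>"
  shows "(N \<ge> 2 \<longrightarrow> infinite {\<theta>\<in>words N. disjunctive N \<theta>})
       \<and> (interior A \<noteq> {} \<longrightarrow> (\<forall>\<theta>\<in>words N. disjunctive N \<theta> \<longrightarrow> strongly_reversible N A \<pi> \<theta>))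
       \<and> (\<forall>\<theta>\<in>words N. strongly_reversible N A \<pi> \<theta> \<longrightarrow> reversible N A \<pi> \<theta>)
       \<and> (\<forall>\<theta>\<in>words N. reversible N A \<pi> \<theta> \<longleftrightarrow> full f A \<theta>)"
proof -
  interpret ifs f N A \<pi> using cont attr coord by unfold_locales
  show ?thesis
  proof (intro conjI impI ballI iffI)
    assume "N \<ge> 2" then show "infinite {\<theta>\<in>words N. disjunctive N \<theta>}" by (rule part1)
  next
    fix \<theta> assume "interior A \<noteq> {}" "\<theta> \<in> words N" "disjunctive N \<theta>"
    then show "strongly_reversible N A \<pi> \<theta>" by (rule part2)
  next
    fix \<theta> assume "strongly_reversible N A \<pi> \<theta>"
    then show "reversible N A \<pi> \<theta>" by (rule part3)
  next
    fix \<theta> assume "\<theta> \<in> words N" "reversible N A \<pi> \<theta>"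
    then show "full f A \<theta>" by (rule part4a)
  next
    fix \<theta> assume "\<theta> \<in> words N" "full f A \<theta>"
    then show "reversible N A \<pi> \<theta>" by (rule part4b)
  qed
qed

end
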